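(* Let $n \ge 2$ and let $g$ be the Grauert metric on $(\mathbb C^n)^{\ast} = \mathbb C^n \setminus \{0\}$, as defined in the context. Then $K^+_g(z) \to +\infty$ as $|z| \to 0$. Furthermore, there exists $R > 0$ such that $K^-_g(z) < 0$ for all $z$ with $|z| \ge R$.
   Context: Let $u:(0,\infty)\to\mathbb R$ be $u(t) = \frac{t-1}{t\log t}$ for $t \neq 1$ and $u(1)=1$; it is positive and real analytic on $(0,\infty)$. Let $v(t) = \int_0^t \tau u^2(\tau)\,d\tau$ for $t>0$. For $z \in (\mathbb C^n)^\ast$ and a tangent vector $X \in \mathbb C^n$ at $z$, the Grauert metric is the K\"ahler metric $$g(z,X) = \Big(1 + \frac{v(|z|^2)}{|z|^2}\Big)|X|^2 + \Big(u^2(|z|^2) - \frac{v(|z|^2)}{|z|^4}\Big)|\langle X, z\rangle|^2,$$ where $\langle X,z\rangle = \sum_{j} X_j \overline{z_j}$ is the standard Hermitian inner product. If $h(T)|dT|^2$ is a Hermitian metric on a domain in $\mathbb C$, its Gaussian curvature is $-2 h^{-1}\,\partial^2 \log h/\partial T \partial \overline T$. The holomorphic sectional curvature $K_g(z,X)$ of $g$ at $z$ in the direction of a nonzero $X$ is the supremum, over all holomorphic maps $\phi$ from a neighbourhood of $0\in\mathbb C$ into $(\mathbb C^n)^\ast$ with $\phi(0)=z$ and $\phi'(0)=X$, of the Gaussian curvature at $0$ of the pulled-back metric $\phi^\ast g$. Set $K^+_g(z) = \sup_{X\neq 0} K_g(z,X)$ and $K^-_g(z) = \inf_{X \neq 0}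 K_g(z,X)$. *)

theory Defs
  imports "HOL-Analysis.Analysis"
begin

definition u_fun :: "real \<Rightarrow> real" where
  "u_fun t = (if t = 1 then 1 else (t - 1) / (t * ln t))"

definition v_fun :: "real \<Rightarrow> real" where
  "v_fun t = integral {0..t} (\<lambda>\<tau>. \<tau> * (u_fun \<tau>)\<^sup>2)"

definition herm :: "complex^'n \<Rightarrow> complex^'n \<Rightarrow> complex" where
  "herm X z = (\<Sum>j\<in>UNIV. X $ j * cnj (z $ j))"

definition grauert :: "complex^'n \<Rightarrow> complex^'n \<Rightarrow> real" where
  "grauert z X =
     (1 + v_fun ((norm z)\<^sup>2) / (norm z)\<^sup>2) * (norm X)\<^sup>2
   + ((u_fun ((norm z)\<^sup>2))\<^sup>2 - v_fun ((norm z)\<^sup>2) / (norm z) ^ 4) * (cmod (herm X z))\<^sup>2"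

text \<open>Wirtinger operator d^2/(dT dTbar) = (1/4)(d^2/ds^2 + d^2/dt^2), T = s + i t, at T = 0.\<close>
definition ddbar_at0 :: "(complex \<Rightarrow> real) \<Rightarrow> real" where
  "ddbar_at0 f = (1/4) * (deriv (deriv (\<lambda>s. f (complex_of_real s))) 0
                        + deriv (deriv (\<lambda>t. f (\<i> * complex_of_real t))) 0)"

text \<open>Gaussian curvature at 0 of the metric h(T)|dT|^2.\<close>
definition gauss_curv0 :: "(complex \<Rightarrow> real) \<Rightarrow> real" where
  "gauss_curv0 h = - 2 / h 0 * ddbar_at0 (\<lambda>T. ln (h T))"

definition vderiv :: "(complex \<Rightarrow> complex^'n) \<Rightarrow> complex \<Rightarrow> complex^'n" where
  "vderiv \<phi> T = (\<chi> j. deriv (\<lambda>w. \<phi> w $ j) T)"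

definition adm_curves :: "complex^'n \<Rightarrow> complex^'n \<Rightarrow> (complex \<Rightarrow> complex^'n) set" where
  "adm_curves z X = {\<phi>. \<exists>S. open S \<and> 0 \<in> S \<and>
       (\<forall>j. (\<lambda>T. \<phi> T $ j) holomorphic_on S) \<and> (\<forall>T\<in>S. \<phi> T \<noteq> 0) \<and>
       \<phi> 0 = z \<and> vderiv \<phi> 0 = X}"

definition pullback :: "(complex \<Rightarrow> complex^'n) \<Rightarrow> complex \<Rightarrow> real" where
  "pullback \<phi> T = grauert (\<phi> T) (vderiv \<phi> T)"

definition hsc :: "complex^'n \<Rightarrow> complex^'n \<Rightarrow> ereal" where
  "hsc z X = (SUP \<phi>\<in>adm_curves z X. ereal (gauss_curv0 (pullback \<phi>)))"

definition Kplus :: "complex^'n \<Rightarrow> ereal" where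
  "Kplus z = (SUP X\<in>{X. X \<noteq> 0}. hsc z X)"

definition Kminus :: "complex^'n \<Rightarrow> ereal" where
  "Kminus z = (INF X\<in>{X. X \<noteq> 0}. hsc z X)"

end

theory Submission
  imports Defs "HOL-Real_Asymp.Real_Asymp" "HOL-Complex_Analysis.Cauchy_Integral_Formula"
begin

definition fI :: "real \<Rightarrow> real" where "fI t = t * (u_fun t)\<^sup>2"
definition gI :: "real \<Rightarrow> real" where "gI t = 1 / (t * (ln t)\<^sup>2)"
definition GI :: "real \<Rightarrow> real" where "GI t = - 1 / ln t"

lemma u_fun_eq: "t \<noteq> 1 \<Longrightarrow> u_fun t = (t - 1) / (t * ln t)"
  by (simp add: u_fun_def)

lemma isCont_u_fun:
  assumes "t > 0" shows "isCont u_fun t"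
proof (cases "t = 1")
  case True
  have lim: "((\<lambda>t::real. (t-1)/(t*ln t)) \<longlongrightarrow> 1) (at 1)" by real_asymp
  have "(u_fun \<longlongrightarrow> 1) (at 1)"
    using lim by (rule Lim_transform_eventually) (auto simp: eventually_at_filter u_fun_def)
  then show ?thesis using True by (simp add: isCont_def u_fun_def)
next
  case False
  have c: "isCont (\<lambda>t::real. (t-1)/(t*ln t)) t"
    using assms False by (intro continuous_intros) auto
  have ev: "eventually (\<lambda>x. x \<in> -{1}) (nhds t)"
    using False by (intro eventually_nhds_in_open) auto
  have evq: "eventually (\<lambda>x. u_fun x = (x-1)/(x*ln x)) (nhds t)"
    using ev by eventually_elim (auto simp: u_fun_def)
  show ?thesis using isCont_cong[OF evq] c by simp
qed

lemma continuous_on_fI: "continuous_on {0<..} fI"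
  unfolding fI_def
  by (intro continuous_at_imp_continuous_on ballI continuous_intros isCont_u_fun) auto

lemma fI_eq_gI: "0 \<le> t \<Longrightarrow> t < 1 \<Longrightarrow> fI t = (1 - t)\<^sup>2 * gI t"
  by (cases "t = 0") (auto simp: fI_def gI_def u_fun_def power2_eq_square field_simps)

lemma GI_deriv: "0 < t \<Longrightarrow> t < 1 \<Longrightarrow> (GI has_real_derivative gI t) (at t)"
  unfolding GI_def gI_def
  by (auto intro!: derivative_eq_intros simp: power2_eq_square field_simps)

lemma GI_cont: assumes "0 < c" "c < 1" shows "continuous_on {0..c} GI"
proof (rule continuous_on_eq_continuous_within[THEN iffD2], intro ballI)
  fix x assume x: "x \<in> {0..c}"
  show "continuous (at x within {0..c}) GI"
  proof (cases "x = 0")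
    case True
    have "(GI \<longlongrightarrow> 0) (at_right 0)" unfolding GI_def by real_asymp
    then have "(GI \<longlongrightarrow> GI 0) (at 0 within {0..c})"
      using assms by (simp add: at_within_Icc_at_right GI_def)
    then show ?thesis using True by (simp add: continuous_within)
  next
    case False
    then have "x > 0" "x < 1" using x assms by auto
    then have "isCont GI x" unfolding GI_def by (intro continuous_intros) auto
    then show ?thesis by (rule continuous_within_subset) auto
  qed
qed

lemma gI_has_integral: assumes "0 < c" "c < 1" shows "(gI has_integral GI c) {0..c}"
proof -
  have "(gI has_integral GI c - GI 0) {0..c}"
    using assms
    by (intro fundamental_theorem_of_calculus_interior GI_cont)
       (auto simp: has_real_derivative_iff_has_vector_derivative[symmetric] intro!: GI_deriv)
  then show ?thesis by (simp add: GI_def)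
qed

lemma fI_integrable_small: assumes "0 < c" "c < 1" shows "fI integrable_on {0..c}"
proof -
  have "fI integrable_on {0<..c}"
  proof (rule measurable_bounded_by_integrable_imp_integrable_real)
    show "fI \<in> borel_measurable (lebesgue_on {0<..c})"
      by (rule continuous_imp_measurable_on_sets_lebesgue)
         (auto intro: continuous_on_subset[OF continuous_on_fI])
    have "gI integrable_on {0..c}" using gI_has_integral[OF assms] by blast
    then show "gI integrable_on {0<..c}"
      by (rule integrable_spike_set) (auto intro: negligible_subset[of "{0}"])
    show "\<bar>fI x\<bar> \<le> gI x" if "x \<in> {0<..c}" for x
    proof -
      have "fI x = (1-x)\<^sup>2 * gI x" using that assms by (intro fI_eq_gI) auto
      moreover have "gI x \<ge> 0" using that by (simp add: gI_def)
      moreover have "(1-x)\<^sup>2 \<le> 1" using that assms by (simp add: power2_eq_square mult_le_one)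
      ultimately show ?thesis using that assms
        by (simp add: mult_left_le_one_le)
    qed
  qed auto
  then show ?thesis
    by (rule integrable_spike_set) (auto intro: negligible_subset[of "{0}"])
qed

lemma fI_integrable: assumes "0 \<le> c" shows "fI integrable_on {0..c}"
proof (cases "c \<le> 1/2")
  case True then show ?thesis using assms
    by (intro integrable_subinterval_real[OF fI_integrable_small[of "1/2"]]) auto
next
  case False
  have "fI integrable_on {1/2..c}"
    by (rule integrable_continuous_real) (rule continuous_on_subset[OF continuous_on_fI], auto)
  moreover have "fI integrable_on {0..1/2}" using fI_integrable_small[of "1/2"] by simp
  ultimately show ?thesis
    using False by (intro Henstock_Kurzweil_Integration.integrable_combine[where a=0 and c="1/2" and b=c]) simp_all
qed

lemma fI_nonneg: "fI t \<ge> 0" if "t \<ge> 0" using that by (simp add: fI_def)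

lemma v_nonneg: "t \<ge> 0 \<Longrightarrow> v_fun t \<ge> 0"
  unfolding v_fun_def fI_def[symmetric]
  by (intro integral_nonneg fI_integrable fI_nonneg) auto

lemma v_bounds: assumes "0 < c" "c < 1"
  shows "(1-c)\<^sup>2 * GI c \<le> v_fun c" "v_fun c \<le> GI c"
proof -
  have v: "v_fun c = integral {0..c} fI" unfolding v_fun_def fI_def by simp
  have gi: "integral {0..c} gI = GI c" using gI_has_integral assms by (auto intro: integral_unique)
  have gint: "gI integrable_on {0..c}" using gI_has_integral assms by blast
  have g0: "x \<in> {0..c} \<Longrightarrow> gI x \<ge> 0" for x by (simp add: gI_def)
  have "integral {0..c} (\<lambda>x. (1-c)\<^sup>2 * gI x) \<le> integral {0..c} fI"
  proof (rule integral_le)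
    show "(\<lambda>x. (1-c)\<^sup>2 * gI x) integrable_on {0..c}" using integrable_on_cmult_left[OF gint, of "(1-c)^2"] by simp
    show "fI integrable_on {0..c}" using assms by (intro fI_integrable) auto
    fix x assume x: "x \<in> {0..c}"
    then have "fI x = (1-x)\<^sup>2 * gI x" using assms by (intro fI_eq_gI) auto
    moreover have "(1-c)\<^sup>2 \<le> (1-x)\<^sup>2" using x assms by (intro power_mono) auto
    ultimately show "(1-c)\<^sup>2 * gI x \<le> fI x" using g0[OF x] by (simp add: mult_right_mono)
  qed
  then show "(1-c)\<^sup>2 * GI c \<le> v_fun c" using gi v by simp
  have "integral {0..c} fI \<le> integral {0..c} gI"
  proof (rule integral_le)
    show "gI integrable_on {0..c}" by (rule gint)
    show "fI integrable_on {0..c}" using assms by (intro fI_integrable) auto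
    fix x assume x: "x \<in> {0..c}"
    then have "fI x = (1-x)\<^sup>2 * gI x" using assms by (intro fI_eq_gI) auto
    moreover have "(1-x)\<^sup>2 \<le> 1" using x assms by (simp add: power2_eq_square mult_le_one)
    ultimately show "fI x \<le> gI x" using g0[OF x] by (simp add: mult_left_le_one_le)
  qed
  then show "v_fun c \<le> GI c" using gi v by simp
qed

lemma v_deriv: assumes "t > 0" shows "(v_fun has_real_derivative fI t) (at t)"
proof -
  define c where "c = t/2"
  have c: "0 < c" "c < t" using assms by (auto simp: c_def)
  have eq: "v_fun x = v_fun c + integral {c..x} fI" if "x \<ge> c" for x
  proof -
    have "integral {0..c} fI + integral {c..x} fI = integral {0..x} fI"
      using that c Henstock_Kurzweil_Integration.integral_combine[where a=0 and c=c and b=x and f=fI] fI_integrable[of x] by simp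
    then show ?thesis unfolding v_fun_def fI_def[symmetric] by simp
  qed
  have cont: "continuous_on {c..t+1} fI" by (rule continuous_on_subset[OF continuous_on_fI]) (use c in auto)
  have "((\<lambda>x. integral {c..x} fI) has_real_derivative fI t) (at t within {c..t+1})"
    using cont c by (intro integral_has_real_derivative) auto
  moreover have "t \<in> interior {c..t+1}" using c by (simp add: interior_atLeastAtMost_real)
  ultimately have d: "((\<lambda>x. integral {c..x} fI) has_real_derivative fI t) (at t)"
    by (metis at_within_interior)
  have "((\<lambda>x. v_fun c + integral {c..x} fI) has_real_derivative fI t) (at t)"
    using DERIV_add[OF DERIV_const d] by simp
  then show ?thesis
  proof (rule has_field_derivative_transform_within_open[where S="{c<..}"])
    show "open {c<..}" by simp
    show "t \<in> {c<..}" using c by simp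
    fix x assume "x \<in> {c<..}"
    then show "v_fun c + integral {c..x} fI = v_fun x" using eq[of x] by simp
  qed
qed


lemma deriv2_ln_formula:
  fixes R a b Rd ad bd A B C :: "real \<Rightarrow> real"
  assumes U: "open U" "0 \<in> U"
    and dRR: "\<And>s. s \<in> U \<Longrightarrow> (R has_real_derivative Rd s) (at s)"
    and da: "\<And>s. s \<in> U \<Longrightarrow> (a has_real_derivative ad s) (at s)"
    and db: "\<And>s. s \<in> U \<Longrightarrow> (b has_real_derivative bd s) (at s)"
    and dRRd: "(Rd has_real_derivative Rdd) (at 0)"
    and da1: "(ad has_real_derivative add) (at 0)"
    and db1: "(bd has_real_derivative bdd) (at 0)"
    and I: "open I" "R 0 \<in> I"
    and dA: "\<And>x. x \<in> I \<Longrightarrow> (A has_real_derivative B x) (at x)"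
    and dB: "\<And>x. x \<in> I \<Longrightarrow> (B has_real_derivative C x) (at x)"
    and dC: "(C has_real_derivative D) (at (R 0))"
    and pos: "A (R 0) * a 0 + B (R 0) * b 0 > 0"
  shows "deriv (deriv (\<lambda>s. ln (A (R s) * a s + B (R s) * b s))) 0 =
     (C (R 0) * (Rd 0)\<^sup>2 * a 0 + B (R 0) * Rdd * a 0 + 2 * B (R 0) * Rd 0 * ad 0 + A (R 0) * add
      + D * (Rd 0)\<^sup>2 * b 0 + C (R 0) * Rdd * b 0 + 2 * C (R 0) * Rd 0 * bd 0 + B (R 0) * bdd)
      / (A (R 0) * a 0 + B (R 0) * b 0)
    - (B (R 0) * Rd 0 * a 0 + A (R 0) * ad 0 + C (R 0) * Rd 0 * b 0 + B (R 0) * bd 0)\<^sup>2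
      / (A (R 0) * a 0 + B (R 0) * b 0)\<^sup>2"
proof -
  define h where "h s = A (R s) * a s + B (R s) * b s" for s
  define h1 where "h1 s = B (R s) * Rd s * a s + A (R s) * ad s + C (R s) * Rd s * b s + B (R s) * bd s" for s
  have dh: "(h has_real_derivative h1 s) (at s)" if "s \<in> U" "R s \<in> I" for s
  proof -
    have 1: "((\<lambda>s. A (R s)) has_real_derivative B (R s) * Rd s) (at s)"
      by (rule DERIV_chain2[OF dA[OF that(2)] dRR[OF that(1)]])
    have 2: "((\<lambda>s. B (R s)) has_real_derivative C (R s) * Rd s) (at s)"
      by (rule DERIV_chain2[OF dB[OF that(2)] dRR[OF that(1)]])
    have "(h has_real_derivative (A (R s) * ad s + B (R s) * Rd s * a s) + (B (R s) * bd s + C (R s) * Rd s * b s)) (at s)"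
      unfolding h_def by (intro DERIV_add DERIV_mult' 1 2 da db that)
    then show ?thesis by (simp add: h1_def algebra_simps)
  qed
  have contr: "isCont R 0" using dRR[OF U(2)] by (rule DERIV_isCont)
  have ev1: "eventually (\<lambda>s. s \<in> U) (nhds 0)" using U by (rule eventually_nhds_in_open)
  have ev2: "eventually (\<lambda>s. R s \<in> I) (nhds 0)"
    using contr I unfolding isCont_def tendsto_at_iff_tendsto_nhds
    by (intro topological_tendstoD) auto
  have ih: "isCont h 0" using dh[OF U(2) I(2)] by (rule DERIV_isCont)
  have ev3: "eventually (\<lambda>s. h s > 0) (nhds 0)"
    using ih pos unfolding isCont_def tendsto_at_iff_tendsto_nhds h_def[symmetric]
    by (intro order_tendstoD) auto
  have "eventually (\<lambda>s. s \<in> U \<and> R s \<in> I \<and> h s > 0) (nhds 0)"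
    using ev1 ev2 ev3 by eventually_elim auto
  then obtain V where V: "open V" "0 \<in> V" "\<And>s. s \<in> V \<Longrightarrow> s \<in> U \<and> R s \<in> I \<and> h s > 0"
    unfolding eventually_nhds by blast
  have dd: "deriv (\<lambda>s. ln (h s)) s = h1 s / h s" if "s \<in> V" for s
  proof -
    have "((\<lambda>s. ln (h s)) has_real_derivative 1 / h s * h1 s) (at s)"
      using DERIV_chain2[OF DERIV_ln[of "h s"] dh] V(3)[OF that] by (simp add: inverse_eq_divide)
    then show ?thesis by (simp add: DERIV_imp_deriv)
  qed
  have dA0: "((\<lambda>s. A (R s)) has_real_derivative B (R 0) * Rd 0) (at 0)"
    by (rule DERIV_chain2[OF dA[OF I(2)] dRR[OF U(2)]])
  have dB0: "((\<lambda>s. B (R s)) has_real_derivative C (R 0) * Rd 0) (at 0)"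
    by (rule DERIV_chain2[OF dB[OF I(2)] dRR[OF U(2)]])
  have dC0: "((\<lambda>s. C (R s)) has_real_derivative D * Rd 0) (at 0)"
    by (rule DERIV_chain2[OF dC dRR[OF U(2)]])
  define H2 where "H2 = C (R 0) * (Rd 0)\<^sup>2 * a 0 + B (R 0) * Rdd * a 0 + 2 * B (R 0) * Rd 0 * ad 0 + A (R 0) * add
      + D * (Rd 0)\<^sup>2 * b 0 + C (R 0) * Rdd * b 0 + 2 * C (R 0) * Rd 0 * bd 0 + B (R 0) * bdd"
  have dh1: "(h1 has_real_derivative H2) (at 0)"
  proof -
    have "(h1 has_real_derivative
        ((B (R 0) * Rd 0) * (ad 0) + (B (R 0) * Rdd + C (R 0) * Rd 0 * Rd 0) * a 0)
      + (A (R 0) * add + B (R 0) * Rd 0 * ad 0)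
      + ((C (R 0) * Rd 0) * bd 0 + (C (R 0) * Rdd + D * Rd 0 * Rd 0) * b 0)
      + (B (R 0) * bdd + C (R 0) * Rd 0 * bd 0)) (at 0)"
      unfolding h1_def
      by (intro DERIV_add DERIV_mult' dA0 dB0 dC0 da[OF U(2)] db[OF U(2)] dRR[OF U(2)] da1 db1 dRRd)
    then show ?thesis by (simp add: H2_def power2_eq_square algebra_simps)
  qed
  have h0: "h 0 > 0" using pos by (simp add: h_def)
  have "((\<lambda>s. h1 s / h s) has_real_derivative (H2 * h 0 - h1 0 * h1 0) / (h 0 * h 0)) (at 0)"
    using DERIV_divide[OF dh1 dh[OF U(2) I(2)]] h0 by simp
  then have "(deriv (\<lambda>s. ln (h s)) has_real_derivative (H2 * h 0 - h1 0 * h1 0) / (h 0 * h 0)) (at 0)"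
    by (rule has_field_derivative_transform_within_open[OF _ V(1) V(2)]) (simp add: dd)
  then have "deriv (deriv (\<lambda>s. ln (h s))) 0 = (H2 * h 0 - h1 0 * h1 0) / (h 0 * h 0)"
    by (rule DERIV_imp_deriv)
  moreover have "(H2 * h 0 - h1 0 * h1 0) / (h 0 * h 0) = H2 / h 0 - (h1 0)\<^sup>2 / (h 0)\<^sup>2"
    using h0 by (simp add: field_simps power2_eq_square)
  ultimately show ?thesis by (simp add: h_def h1_def H2_def)
qed


definition u1 :: "real \<Rightarrow> real" where "u1 t = (ln t + 1 - t)/(t^2 * (ln t)^2)"
definition u2 :: "real \<Rightarrow> real" where "u2 t = ((1-t)*ln t - 2*(ln t+1-t)*(ln t+1))/(t^3*(ln t)^3)"
definition A_fun :: "real \<Rightarrow> real" where "A_fun t = 1 + v_fun t / t"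
definition B_fun :: "real \<Rightarrow> real" where "B_fun t = (u_fun t)\<^sup>2 - v_fun t / t\<^sup>2"
definition C_fun :: "real \<Rightarrow> real" where
  "C_fun t = 2 * u_fun t * u1 t - (u_fun t)\<^sup>2 / t + 2 * v_fun t / t^3"
definition D_fun :: "real \<Rightarrow> real" where
  "D_fun t = 2 * (u1 t)\<^sup>2 + 2 * u_fun t * u2 t - 2 * u_fun t * u1 t / t + 3 * (u_fun t)\<^sup>2 / t\<^sup>2 - 6 * v_fun t / t^4"

lemma u_deriv: assumes "t > 0" "t \<noteq> 1" shows "(u_fun has_real_derivative u1 t) (at t)"
proof -
  have l: "ln t \<noteq> 0" using assms by simp
  have "((\<lambda>t. (t-1)/(t*ln t)) has_real_derivative u1 t) (at t)"
    using assms l unfolding u1_def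
    by (auto intro!: derivative_eq_intros simp: field_simps power2_eq_square)
  then show ?thesis
  proof (rule has_field_derivative_transform_within_open[where S="{0<..} - {1}"])
    show "open ({0<..} - {1::real})" by (intro open_Diff) auto
  qed (use assms in \<open>auto simp: u_fun_def\<close>)
qed

lemma u1_deriv: assumes "t > 0" "t \<noteq> 1" shows "(u1 has_real_derivative u2 t) (at t)"
proof -
  have l: "ln t \<noteq> 0" using assms by simp
  show ?thesis
    using assms l unfolding u1_def u2_def
    by (auto intro!: derivative_eq_intros simp: field_simps power2_eq_square eval_nat_numeral)
qed

lemma A_deriv: assumes "t > 0" shows "(A_fun has_real_derivative B_fun t) (at t)"
proof -
  have "(A_fun has_real_derivative (fI t * t - v_fun t) / (t*t)) (at t)"
    unfolding A_fun_def using assms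
    by (auto intro!: derivative_eq_intros v_deriv)
  then show ?thesis using assms
    by (simp add: B_fun_def fI_def field_simps power2_eq_square)
qed

lemma B_deriv: assumes "t > 0" "t \<noteq> 1" shows "(B_fun has_real_derivative C_fun t) (at t)"
proof -
  have "(B_fun has_real_derivative 2 * u_fun t * u1 t - (fI t * t\<^sup>2 - v_fun t * (2 * t)) / (t\<^sup>2 * t\<^sup>2)) (at t)"
    unfolding B_fun_def using assms
    by (auto intro!: derivative_eq_intros v_deriv u_deriv simp: power2_eq_square)
  then show ?thesis
    by (rule DERIV_cong) (use assms in \<open>simp add: C_fun_def fI_def field_simps power2_eq_square eval_nat_numeral\<close>)
qed

lemma C_deriv: assumes "t > 0" "t \<noteq> 1" shows "(C_fun has_real_derivative D_fun t) (at t)"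
proof -
  have "(C_fun has_real_derivative
      2 * (u1 t * u1 t + u_fun t * u2 t)
      - (2 * u_fun t * u1 t * t - (u_fun t)\<^sup>2) / (t * t)
      + 2 * (fI t * t^3 - v_fun t * (3 * t\<^sup>2)) / (t^3 * t^3)) (at t)"
    unfolding C_fun_def using assms
    by (auto intro!: derivative_eq_intros v_deriv u_deriv u1_deriv simp: power2_eq_square mult_ac)
  then show ?thesis
    by (rule DERIV_cong) (use assms in \<open>simp add: D_fun_def fI_def field_simps power2_eq_square eval_nat_numeral\<close>)
qed


lemma path_vd:
  fixes F :: "complex \<Rightarrow> complex"
  assumes "(F has_field_derivative F') (at (e * of_real s))"
  shows "((\<lambda>s. F (e * of_real s)) has_vector_derivative e * F') (at s)"
proof -
  have "((\<lambda>x. F (e * x)) has_field_derivative F' * e) (at (of_real s))"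
    using DERIV_chain2[OF assms DERIV_cmult_Id[of e "of_real s"]] by simp
  from has_vector_derivative_real_field[OF this]
  show ?thesis by (simp add: mult.commute)
qed

lemma pair_vd:
  fixes F G :: "real \<Rightarrow> complex"
  assumes "(F has_vector_derivative F') (at s)" "(G has_vector_derivative G') (at s)"
  shows "((\<lambda>s. F s * cnj (G s)) has_vector_derivative (F s * cnj G' + F' * cnj (G s))) (at s)"
  by (intro has_vector_derivative_mult has_vector_derivative_cnj assms)

lemma normsq_vec: "(norm (x :: complex^'n))\<^sup>2 = Re (\<Sum>j\<in>UNIV. x $ j * cnj (x $ j))"
proof -
  have "(norm x)\<^sup>2 = (\<Sum>j\<in>UNIV. (cmod (x $ j))\<^sup>2)"
    unfolding norm_vec_def L2_set_def by (simp add: sum_nonneg)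
  also have "\<dots> = Re (\<Sum>j\<in>UNIV. x $ j * cnj (x $ j))"
    by (simp add: Re_sum complex_mult_cnj cmod_power2)
  finally show ?thesis .
qed

lemma cmodsq: "(cmod w)\<^sup>2 = Re (w * cnj w)"
  by (simp add: complex_mult_cnj cmod_power2)

lemma grauert_AB: "grauert z X = A_fun ((norm z)\<^sup>2) * (norm X)\<^sup>2 + B_fun ((norm z)\<^sup>2) * (cmod (herm X z))\<^sup>2"
  by (simp add: grauert_def A_fun_def B_fun_def power_mult_distrib[symmetric] flip: power_mult)


context
  fixes \<phi> :: "complex \<Rightarrow> complex^'n" and S :: "complex set" and e :: complex
  assumes S: "open S" "0 \<in> S" and hol: "\<And>j. (\<lambda>T. \<phi> T $ j) holomorphic_on S"
begin

definition "gcf0 j = (\<lambda>T. \<phi> T $ j)"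
definition "gcf1 j = deriv (gcf0 j)"
definition "gcf2 j = deriv (gcf1 j)"
definition "gcf3 j = deriv (gcf2 j)"
definition "gcpp s = e * complex_of_real s"
definition "gcU = {s. gcpp s \<in> S}"

lemma hol0: "gcf0 j holomorphic_on S" using hol by (simp add: gcf0_def)
lemma hol1: "gcf1 j holomorphic_on S" unfolding gcf1_def using hol0 S by (intro holomorphic_deriv)
lemma hol2: "gcf2 j holomorphic_on S" unfolding gcf2_def using hol1 S by (intro holomorphic_deriv)
lemma hol3: "gcf3 j holomorphic_on S" unfolding gcf3_def using hol2 S by (intro holomorphic_deriv)

lemma U_open: "open gcU"
proof -
  have "gcU = (\<lambda>s. e * complex_of_real s) -` S" by (auto simp: gcU_def gcpp_def)
  also have "open \<dots>" using S by (intro continuous_open_vimage) (auto intro!: continuous_intros)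
  finally show ?thesis .
qed

lemma U0: "0 \<in> gcU" using S by (simp add: gcU_def gcpp_def)

lemma vd0: "s \<in> gcU \<Longrightarrow> ((\<lambda>s. gcf0 j (gcpp s)) has_vector_derivative e * gcf1 j (gcpp s)) (at s)"
  unfolding gcpp_def gcU_def gcf1_def
  by (intro path_vd holomorphic_derivI[OF hol0 S(1)]) (simp add: gcpp_def)
lemma vd1: "s \<in> gcU \<Longrightarrow> ((\<lambda>s. gcf1 j (gcpp s)) has_vector_derivative e * gcf2 j (gcpp s)) (at s)"
  unfolding gcpp_def gcU_def gcf2_def
  by (intro path_vd holomorphic_derivI[OF hol1 S(1)]) (simp add: gcpp_def)
lemma vd2: "s \<in> gcU \<Longrightarrow> ((\<lambda>s. gcf2 j (gcpp s)) has_vector_derivative e * gcf3 j (gcpp s)) (at s)"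
  unfolding gcpp_def gcU_def gcf3_def
  by (intro path_vd holomorphic_derivI[OF hol2 S(1)]) (simp add: gcpp_def)

definition "gcPz s = (\<Sum>j\<in>UNIV. gcf0 j (gcpp s) * cnj (gcf0 j (gcpp s)))"
definition "gcPa s = (\<Sum>j\<in>UNIV. gcf1 j (gcpp s) * cnj (gcf1 j (gcpp s)))"
definition "gcW s = (\<Sum>j\<in>UNIV. gcf1 j (gcpp s) * cnj (gcf0 j (gcpp s)))"
definition "gcQ s = (\<Sum>j\<in>UNIV. gcf2 j (gcpp s) * cnj (gcf0 j (gcpp s)))"
definition "gcM s = (\<Sum>j\<in>UNIV. gcf2 j (gcpp s) * cnj (gcf1 j (gcpp s)))"
definition "gcPy s = (\<Sum>j\<in>UNIV. gcf2 j (gcpp s) * cnj (gcf2 j (gcpp s)))"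
definition "gcN s = (\<Sum>j\<in>UNIV. gcf3 j (gcpp s) * cnj (gcf1 j (gcpp s)))"
definition "gcK s = (\<Sum>j\<in>UNIV. gcf3 j (gcpp s) * cnj (gcf0 j (gcpp s)))"

lemma sum_vd:
  assumes "\<And>j. ((\<lambda>s. F j s) has_vector_derivative F' j) (at s)"
      and "\<And>j. ((\<lambda>s. G j s) has_vector_derivative G' j) (at s)"
  shows "((\<lambda>s. \<Sum>j\<in>UNIV. F j s * cnj (G j s)) has_vector_derivative
           (\<Sum>j\<in>UNIV. F j s * cnj (G' j) + F' j * cnj (G j s))) (at s)"
  by (intro has_vector_derivative_sum pair_vd assms)

lemma Pz_vd: "s \<in> gcU \<Longrightarrow> (gcPz has_vector_derivative cnj e * cnj (gcW s) + e * gcW s) (at s)"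
proof -
  assume s: "s \<in> gcU"
  have "(gcPz has_vector_derivative (\<Sum>j\<in>UNIV. gcf0 j (gcpp s) * cnj (e * gcf1 j (gcpp s)) + e * gcf1 j (gcpp s) * cnj (gcf0 j (gcpp s)))) (at s)"
    unfolding gcPz_def by (intro sum_vd vd0 s)
  moreover have "(\<Sum>j\<in>UNIV. gcf0 j (gcpp s) * cnj (e * gcf1 j (gcpp s)) + e * gcf1 j (gcpp s) * cnj (gcf0 j (gcpp s)))
     = cnj e * cnj (gcW s) + e * gcW s"
    by (simp add: gcW_def sum.distrib sum_distrib_left cnj_sum mult_ac)
  ultimately show ?thesis by simp
qed

lemma Pa_vd: "s \<in> gcU \<Longrightarrow> (gcPa has_vector_derivative cnj e * cnj (gcM s) + e * gcM s) (at s)"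
proof -
  assume s: "s \<in> gcU"
  have "(gcPa has_vector_derivative (\<Sum>j\<in>UNIV. gcf1 j (gcpp s) * cnj (e * gcf2 j (gcpp s)) + e * gcf2 j (gcpp s) * cnj (gcf1 j (gcpp s)))) (at s)"
    unfolding gcPa_def by (intro sum_vd vd1 s)
  moreover have "(\<Sum>j\<in>UNIV. gcf1 j (gcpp s) * cnj (e * gcf2 j (gcpp s)) + e * gcf2 j (gcpp s) * cnj (gcf1 j (gcpp s)))
     = cnj e * cnj (gcM s) + e * gcM s"
    by (simp add: gcM_def sum.distrib sum_distrib_left cnj_sum mult_ac)
  ultimately show ?thesis by simp
qed

lemma W_vd: "s \<in> gcU \<Longrightarrow> (gcW has_vector_derivative cnj e * gcPa s + e * gcQ s) (at s)"
proof -
  assume s: "s \<in> gcU"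
  have "(gcW has_vector_derivative (\<Sum>j\<in>UNIV. gcf1 j (gcpp s) * cnj (e * gcf1 j (gcpp s)) + e * gcf2 j (gcpp s) * cnj (gcf0 j (gcpp s)))) (at s)"
    unfolding gcW_def by (intro sum_vd vd0 vd1 s)
  moreover have "(\<Sum>j\<in>UNIV. gcf1 j (gcpp s) * cnj (e * gcf1 j (gcpp s)) + e * gcf2 j (gcpp s) * cnj (gcf0 j (gcpp s)))
     = cnj e * gcPa s + e * gcQ s"
    by (simp add: gcPa_def gcQ_def sum.distrib sum_distrib_left mult_ac)
  ultimately show ?thesis by simp
qed

lemma Q_vd: "s \<in> gcU \<Longrightarrow> (gcQ has_vector_derivative cnj e * gcM s + e * gcK s) (at s)"
proof -
  assume s: "s \<in> gcU"
  have "(gcQ has_vector_derivative (\<Sum>j\<in>UNIV. gcf2 j (gcpp s) * cnj (e * gcf1 j (gcpp s)) + e * gcf3 j (gcpp s) * cnj (gcf0 j (gcpp s)))) (at s)"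
    unfolding gcQ_def by (intro sum_vd vd0 vd2 s)
  moreover have "(\<Sum>j\<in>UNIV. gcf2 j (gcpp s) * cnj (e * gcf1 j (gcpp s)) + e * gcf3 j (gcpp s) * cnj (gcf0 j (gcpp s)))
     = cnj e * gcM s + e * gcK s"
    by (simp add: gcM_def gcK_def sum.distrib sum_distrib_left mult_ac)
  ultimately show ?thesis by simp
qed

lemma M_vd: "s \<in> gcU \<Longrightarrow> (gcM has_vector_derivative cnj e * gcPy s + e * gcN s) (at s)"
proof -
  assume s: "s \<in> gcU"
  have "(gcM has_vector_derivative (\<Sum>j\<in>UNIV. gcf2 j (gcpp s) * cnj (e * gcf2 j (gcpp s)) + e * gcf3 j (gcpp s) * cnj (gcf1 j (gcpp s)))) (at s)"
    unfolding gcM_def by (intro sum_vd vd1 vd2 s)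
  moreover have "(\<Sum>j\<in>UNIV. gcf2 j (gcpp s) * cnj (e * gcf2 j (gcpp s)) + e * gcf3 j (gcpp s) * cnj (gcf1 j (gcpp s)))
     = cnj e * gcPy s + e * gcN s"
    by (simp add: gcPy_def gcN_def sum.distrib sum_distrib_left mult_ac)
  ultimately show ?thesis by simp
qed

definition "gcrho s = Re (gcPz s)"
definition "gcrho1 s = 2 * Re (e * gcW s)"
definition "gcaa s = Re (gcPa s)"
definition "gcaa1 s = 2 * Re (e * gcM s)"
definition "gcbb s = Re (gcW s * cnj (gcW s))"
definition "gcbb1 s = 2 * Re ((cnj e * gcPa s + e * gcQ s) * cnj (gcW s))"

lemma rho_d: "s \<in> gcU \<Longrightarrow> (gcrho has_real_derivative gcrho1 s) (at s)"
proof -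
  assume s: "s \<in> gcU"
  have "((\<lambda>s. Re (gcPz s)) has_real_derivative Re (cnj e * cnj (gcW s) + e * gcW s)) (at s)"
    by (rule has_field_derivative_Re[OF Pz_vd[OF s]])
  moreover have "Re (cnj e * cnj (gcW s) + e * gcW s) = gcrho1 s"
    by (simp add: gcrho1_def flip: complex_cnj_mult)
  ultimately show ?thesis by (simp add: gcrho_def[abs_def])
qed

lemma aa_d: "s \<in> gcU \<Longrightarrow> (gcaa has_real_derivative gcaa1 s) (at s)"
proof -
  assume s: "s \<in> gcU"
  have "((\<lambda>s. Re (gcPa s)) has_real_derivative Re (cnj e * cnj (gcM s) + e * gcM s)) (at s)"
    by (rule has_field_derivative_Re[OF Pa_vd[OF s]])
  moreover have "Re (cnj e * cnj (gcM s) + e * gcM s) = gcaa1 s"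
    by (simp add: gcaa1_def flip: complex_cnj_mult)
  ultimately show ?thesis by (simp add: gcaa_def[abs_def])
qed

lemma bb_d: "s \<in> gcU \<Longrightarrow> (gcbb has_real_derivative gcbb1 s) (at s)"
proof -
  assume s: "s \<in> gcU"
  have "((\<lambda>s. gcW s * cnj (gcW s)) has_vector_derivative
      gcW s * cnj (cnj e * gcPa s + e * gcQ s) + (cnj e * gcPa s + e * gcQ s) * cnj (gcW s)) (at s)"
    by (intro pair_vd W_vd s)
  from has_field_derivative_Re[OF this]
  have "((\<lambda>s. Re (gcW s * cnj (gcW s))) has_real_derivative
      Re (gcW s * cnj (cnj e * gcPa s + e * gcQ s) + (cnj e * gcPa s + e * gcQ s) * cnj (gcW s))) (at s)" .
  moreover have "Re (gcW s * cnj (cnj e * gcPa s + e * gcQ s) + (cnj e * gcPa s + e * gcQ s) * cnj (gcW s)) = gcbb1 s"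
  proof -
    have "Re (gcW s * cnj (cnj e * gcPa s + e * gcQ s)) = Re ((cnj e * gcPa s + e * gcQ s) * cnj (gcW s))"
      by (simp add: algebra_simps)
    then show ?thesis by (simp add: gcbb1_def)
  qed
  ultimately show ?thesis by (simp add: gcbb_def[abs_def])
qed

definition "gcW1 = cnj e * gcPa 0 + e * gcQ 0"
definition "gcX1 = cnj e * (cnj e * cnj (gcM 0) + e * gcM 0) + e * (cnj e * gcM 0 + e * gcK 0)"

lemma rho1_d: "(gcrho1 has_real_derivative 2 * Re (e * gcW1)) (at 0)"
proof -
  have "((\<lambda>s. 2 * Re (e * gcW s)) has_real_derivative 2 * Re (e * gcW1)) (at 0)"
    using W_vd[OF U0] unfolding gcW1_def
    by (auto intro!: derivative_eq_intros)
  then show ?thesis by (simp add: gcrho1_def[abs_def])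
qed

lemma aa1_d: "(gcaa1 has_real_derivative 2 * Re (e * (cnj e * gcPy 0 + e * gcN 0))) (at 0)"
proof -
  have "((\<lambda>s. 2 * Re (e * gcM s)) has_real_derivative 2 * Re (e * (cnj e * gcPy 0 + e * gcN 0))) (at 0)"
    using M_vd[OF U0]
    by (auto intro!: derivative_eq_intros)
  then show ?thesis by (simp add: gcaa1_def[abs_def])
qed

lemma bb1_d: "(gcbb1 has_real_derivative 2 * Re (gcW1 * cnj gcW1 + gcX1 * cnj (gcW 0))) (at 0)"
proof -
  have v: "((\<lambda>s. cnj e * gcPa s + e * gcQ s) has_vector_derivative gcX1) (at 0)"
    unfolding gcX1_def by (intro has_vector_derivative_add has_vector_derivative_mult_right Pa_vd Q_vd U0)
  have "((\<lambda>s. (cnj e * gcPa s + e * gcQ s) * cnj (gcW s)) has_vector_derivative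
     (cnj e * gcPa 0 + e * gcQ 0) * cnj gcW1 + gcX1 * cnj (gcW 0)) (at 0)"
    unfolding gcW1_def by (intro pair_vd v W_vd U0)
  from has_field_derivative_Re[OF this]
  have "((\<lambda>s. 2 * Re ((cnj e * gcPa s + e * gcQ s) * cnj (gcW s))) has_real_derivative
     2 * Re ((cnj e * gcPa 0 + e * gcQ 0) * cnj gcW1 + gcX1 * cnj (gcW 0))) (at 0)"
    by (intro DERIV_cmult)
  then show ?thesis by (simp add: gcbb1_def[abs_def] gcW1_def)
qed

lemma pullback_eq: "pullback \<phi> T = A_fun (Re (\<Sum>j\<in>UNIV. gcf0 j T * cnj (gcf0 j T))) * Re (\<Sum>j\<in>UNIV. gcf1 j T * cnj (gcf1 j T))
   + B_fun (Re (\<Sum>j\<in>UNIV. gcf0 j T * cnj (gcf0 j T))) * Re ((\<Sum>j\<in>UNIV. gcf1 j T * cnj (gcf0 j T)) * cnj (\<Sum>j\<in>UNIV. gcf1 j T * cnj (gcf0 j T)))"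
  unfolding pullback_def grauert_AB normsq_vec cmodsq
  by (simp add: vderiv_def herm_def gcf1_def gcf0_def)

lemma pullback_path: "pullback \<phi> (e * complex_of_real s) = A_fun (gcrho s) * gcaa s + B_fun (gcrho s) * gcbb s"
  using pullback_eq[of "gcpp s"]
  by (simp add: gcrho_def gcaa_def gcbb_def gcPz_def gcPa_def gcW_def gcpp_def)

lemma deriv2_path:
  assumes I: "open I" "gcrho 0 \<in> I" "I \<subseteq> {0<..} - {1}"
    and pos: "A_fun (gcrho 0) * gcaa 0 + B_fun (gcrho 0) * gcbb 0 > 0"
  shows "deriv (deriv (\<lambda>s. ln (pullback \<phi> (e * complex_of_real s)))) 0 =
     (C_fun (gcrho 0) * (gcrho1 0)\<^sup>2 * gcaa 0 + B_fun (gcrho 0) * (2 * Re (e * gcW1)) * gcaa 0 + 2 * B_fun (gcrho 0) * gcrho1 0 * gcaa1 0 + A_fun (gcrho 0) * (2 * Re (e * (cnj e * gcPy 0 + e * gcN 0)))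
      + D_fun (gcrho 0) * (gcrho1 0)\<^sup>2 * gcbb 0 + C_fun (gcrho 0) * (2 * Re (e * gcW1)) * gcbb 0 + 2 * C_fun (gcrho 0) * gcrho1 0 * gcbb1 0 + B_fun (gcrho 0) * (2 * Re (gcW1 * cnj gcW1 + gcX1 * cnj (gcW 0))))
      / (A_fun (gcrho 0) * gcaa 0 + B_fun (gcrho 0) * gcbb 0)
    - (B_fun (gcrho 0) * gcrho1 0 * gcaa 0 + A_fun (gcrho 0) * gcaa1 0 + C_fun (gcrho 0) * gcrho1 0 * gcbb 0 + B_fun (gcrho 0) * gcbb1 0)\<^sup>2
      / (A_fun (gcrho 0) * gcaa 0 + B_fun (gcrho 0) * gcbb 0)\<^sup>2"
proof -
  have r0: "gcrho 0 > 0" "gcrho 0 \<noteq> 1" using I by auto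
  have eq: "(\<lambda>s. ln (pullback \<phi> (e * complex_of_real s))) = (\<lambda>s. ln (A_fun (gcrho s) * gcaa s + B_fun (gcrho s) * gcbb s))"
    by (simp add: pullback_path)
  have dA: "\<And>x. x \<in> I \<Longrightarrow> (A_fun has_real_derivative B_fun x) (at x)"
    using I by (auto intro: A_deriv)
  have dB: "\<And>x. x \<in> I \<Longrightarrow> (B_fun has_real_derivative C_fun x) (at x)"
    using I by (auto intro: B_deriv)
  show ?thesis unfolding eq
    by (rule deriv2_ln_formula[where R=gcrho and a=gcaa and b=gcbb and Rd=gcrho1 and ad=gcaa1 and bd=gcbb1
         and A=A_fun and B=B_fun and C=C_fun and U=gcU and I=I and D="D_fun (gcrho 0)"
         and Rdd="2 * Re (e * gcW1)" and add="2 * Re (e * (cnj e * gcPy 0 + e * gcN 0))"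
         and bdd="2 * Re (gcW1 * cnj gcW1 + gcX1 * cnj (gcW 0))",
         OF U_open U0 rho_d aa_d bb_d rho1_d aa1_d bb1_d I(1) I(2) dA dB C_deriv[OF r0] pos])
qed

end

definition d2form :: "real \<Rightarrow> real \<Rightarrow> real \<Rightarrow> real \<Rightarrow> real \<Rightarrow> real \<Rightarrow> real \<Rightarrow> real \<Rightarrow> real \<Rightarrow> real \<Rightarrow> real \<Rightarrow> real \<Rightarrow> real" where
  "d2form A B C D r1 r2 a0 a1 a2 b0 b1 b2 =
     (C * r1\<^sup>2 * a0 + B * r2 * a0 + 2 * B * r1 * a1 + A * a2 + D * r1\<^sup>2 * b0 + C * r2 * b0 + 2 * C * r1 * b1 + B * b2)
      / (A * a0 + B * b0)
    - (B * r1 * a0 + A * a1 + C * r1 * b0 + B * b1)\<^sup>2 / (A * a0 + B * b0)\<^sup>2"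

definition Eform :: "real \<Rightarrow> real \<Rightarrow> real \<Rightarrow> real \<Rightarrow> complex \<Rightarrow> complex \<Rightarrow> complex \<Rightarrow> complex \<Rightarrow> complex \<Rightarrow> complex \<Rightarrow> complex \<Rightarrow> complex \<Rightarrow> real" where
  "Eform A B C D e pa w q m py n k =
     d2form A B C D (2 * Re (e * w)) (2 * Re (e * (cnj e * pa + e * q))) (Re pa) (2 * Re (e * m))
       (2 * Re (e * (cnj e * py + e * n))) (Re (w * cnj w)) (2 * Re ((cnj e * pa + e * q) * cnj w))
       (2 * Re ((cnj e * pa + e * q) * cnj (cnj e * pa + e * q)
          + (cnj e * (cnj e * cnj m + e * m) + e * (cnj e * m + e * k)) * cnj w))"

definition Kform :: "real \<Rightarrow> real \<Rightarrow> real \<Rightarrow> real \<Rightarrow> complex \<Rightarrow> complex \<Rightarrow> complex \<Rightarrow> complex \<Rightarrow> complex \<Rightarrow> complex \<Rightarrow> complex \<Rightarrow> real" where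
  "Kform A B C D pa w q m py n k =
     - 2 / (A * Re pa + B * Re (w * cnj w)) * (1/4 * (Eform A B C D 1 pa w q m py n k + Eform A B C D \<i> pa w q m py n k))"

lemma gauss_formula:
  fixes \<phi> :: "complex \<Rightarrow> complex^'n"
  assumes S: "open S" "0 \<in> S" and hol: "\<And>j. (\<lambda>T. \<phi> T $ j) holomorphic_on S"
    and I: "open I" "(norm (\<phi> 0))\<^sup>2 \<in> I" "I \<subseteq> {0<..} - {1}"
    and pos: "A_fun ((norm (\<phi> 0))\<^sup>2) * (norm (vderiv \<phi> 0))\<^sup>2 + B_fun ((norm (\<phi> 0))\<^sup>2) * (cmod (herm (vderiv \<phi> 0) (\<phi> 0)))\<^sup>2 > 0"
  shows "gauss_curv0 (pullback \<phi>) =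
    Kform (A_fun ((norm (\<phi> 0))\<^sup>2)) (B_fun ((norm (\<phi> 0))\<^sup>2)) (C_fun ((norm (\<phi> 0))\<^sup>2)) (D_fun ((norm (\<phi> 0))\<^sup>2))
      (herm (vderiv \<phi> 0) (vderiv \<phi> 0)) (herm (vderiv \<phi> 0) (\<phi> 0))
      (herm (\<chi> j. gcf2 \<phi> j 0) (\<phi> 0)) (herm (\<chi> j. gcf2 \<phi> j 0) (vderiv \<phi> 0))
      (herm (\<chi> j. gcf2 \<phi> j 0) (\<chi> j. gcf2 \<phi> j 0)) (herm (\<chi> j. gcf3 \<phi> j 0) (vderiv \<phi> 0))
      (herm (\<chi> j. gcf3 \<phi> j 0) (\<phi> 0))"
proof -
  define z where "z = \<phi> 0"
  define X where "X = vderiv \<phi> 0"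
  define Y where "Y = (\<chi> j. gcf2 \<phi> j 0)"
  define Z where "Z = (\<chi> j. gcf3 \<phi> j 0)"
  define r where "r = (norm z)\<^sup>2"
  note defs = gcrho_def[OF S hol] gcrho1_def[OF S hol] gcaa_def[OF S hol] gcaa1_def[OF S hol]
     gcbb_def[OF S hol] gcbb1_def[OF S hol] gcW1_def[OF S hol] gcX1_def[OF S hol]
     gcPz_def[OF S hol] gcPa_def[OF S hol] gcW_def[OF S hol] gcQ_def[OF S hol] gcM_def[OF S hol]
     gcPy_def[OF S hol] gcN_def[OF S hol] gcK_def[OF S hol] gcpp_def[OF S hol]
  have f0: "gcf0 \<phi> j 0 = z $ j" for j by (simp add: gcf0_def[OF S hol] z_def)
  have f1: "gcf1 \<phi> j 0 = X $ j" for j by (simp add: gcf1_def[OF S hol] X_def vderiv_def gcf0_def[OF S hol])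
  have f2: "gcf2 \<phi> j 0 = Y $ j" for j by (simp add: Y_def)
  have f3: "gcf3 \<phi> j 0 = Z $ j" for j by (simp add: Z_def)
  have v: "gcrho \<phi> e 0 = r" "gcaa \<phi> e 0 = Re (herm X X)" "gcbb \<phi> e 0 = Re (herm X z * cnj (herm X z))"
     "gcrho1 \<phi> e 0 = 2 * Re (e * herm X z)" "gcaa1 \<phi> e 0 = 2 * Re (e * herm Y X)"
     "gcbb1 \<phi> e 0 = 2 * Re ((cnj e * herm X X + e * herm Y z) * cnj (herm X z))"
     "gcW1 \<phi> e = cnj e * herm X X + e * herm Y z"
     "gcX1 \<phi> e = cnj e * (cnj e * cnj (herm Y X) + e * herm Y X) + e * (cnj e * herm Y X + e * herm Z z)"
     "gcPy \<phi> e 0 = herm Y Y" "gcN \<phi> e 0 = herm Z X" "gcW \<phi> e 0 = herm X z" for e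
    by (simp_all add: defs f0 f1 f2 f3 herm_def r_def normsq_vec)
  have posv: "0 < A_fun (gcrho \<phi> e 0) * gcaa \<phi> e 0 + B_fun (gcrho \<phi> e 0) * gcbb \<phi> e 0" for e
    using pos by (simp add: v r_def z_def X_def normsq_vec cmodsq herm_def)
  have I': "gcrho \<phi> e 0 \<in> I" for e using I by (simp add: v r_def z_def)
  have d1: "deriv (deriv (\<lambda>s. ln (pullback \<phi> (complex_of_real s)))) 0 = Eform (A_fun r) (B_fun r) (C_fun r) (D_fun r) 1
      (herm X X) (herm X z) (herm Y z) (herm Y X) (herm Y Y) (herm Z X) (herm Z z)"
    using deriv2_path[OF S hol I(1) I' I(3) posv, of 1]
    unfolding v by (simp add: Eform_def d2form_def)
  have di: "deriv (deriv (\<lambda>s. ln (pullback \<phi> (\<i> * complex_of_real s)))) 0 = Eform (A_fun r) (B_fun r) (C_fun r) (D_fun r) \<i>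
      (herm X X) (herm X z) (herm Y z) (herm Y X) (herm Y Y) (herm Z X) (herm Z z)"
    using deriv2_path[OF S hol I(1) I' I(3) posv, of \<i>]
    unfolding v by (simp only: Eform_def d2form_def)
  have h0: "pullback \<phi> 0 = A_fun r * Re (herm X X) + B_fun r * Re (herm X z * cnj (herm X z))"
    using pullback_eq[OF S hol, of 0]
    by (simp add: f0 f1 herm_def r_def normsq_vec)
  show ?thesis
    unfolding gauss_curv0_def ddbar_at0_def d1 di h0 Kform_def
    by (simp add: z_def X_def Y_def Z_def r_def)
qed


lemma d2form_NH: "d2form A B C D r1 r2 a0 a1 a2 b0 b1 b2 =
   (C * r1\<^sup>2 * a0 + B * r2 * a0 + 2 * B * r1 * a1 + A * a2 + D * r1\<^sup>2 * b0 + C * r2 * b0 + 2 * C * r1 * b1 + B * b2) / (A * a0 + B * b0)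
   - (B * r1 * a0 + A * a1 + C * r1 * b0 + B * b1)\<^sup>2 / (A * a0 + B * b0)\<^sup>2"
  by (simp add: d2form_def)

lemma combine2:
  fixes h N1 N2 H1 H2 :: real
  assumes "h \<noteq> 0"
  shows "- 2 / h * (1/4 * ((N1 / h - H1\<^sup>2 / h\<^sup>2) + (N2 / h - H2\<^sup>2 / h\<^sup>2))) = - (1/2) * (h * (N1 + N2) - H1\<^sup>2 - H2\<^sup>2) / h^3"
  using assms by (simp add: field_simps power2_eq_square eval_nat_numeral)

lemma Eform_rad1:
  assumes "p = Complex p1 p2" "k = Complex k1 k2"
  shows "Eform A B C D 1 (of_real r) (of_real r) p p (of_real y) k k =
    d2form A B C D (2*r) (2*(r+p1)) r (2*p1) (2*(y+k1)) (r*r) (2*r*(r+p1)) (2*((r+p1)\<^sup>2+p2\<^sup>2+r*(3*p1+k1)))"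
  unfolding Eform_def assms by (simp add: algebra_simps power2_eq_square)

lemma Eform_radi:
  assumes "p = Complex p1 p2" "k = Complex k1 k2"
  shows "Eform A B C D \<i> (of_real r) (of_real r) p p (of_real y) k k =
    d2form A B C D 0 (2*(r-p1)) r (-2*p2) (2*(y-k1)) (r*r) (-2*r*p2) (2*((p1-r)\<^sup>2+p2\<^sup>2+r*(p1-k1)))"
  unfolding Eform_def assms by (simp add: algebra_simps power2_eq_square)

lemma poly_rad:
  fixes A B C D r p1 p2 k1 k2 y :: real
  shows "(A*r + B*(r*r)) *
     ((C * (2*r)\<^sup>2 * r + B * (2*(r+p1)) * r + 2 * B * (2*r) * (2*p1) + A * (2*(y+k1)) + D * (2*r)\<^sup>2 * (r*r) + C * (2*(r+p1)) * (r*r) + 2 * C * (2*r) * (2*r*(r+p1)) + B * (2*((r+p1)\<^sup>2+p2\<^sup>2+r*(3*p1+k1))))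
    + (C * 0\<^sup>2 * r + B * (2*(r-p1)) * r + 2 * B * 0 * (-2*p2) + A * (2*(y-k1)) + D * 0\<^sup>2 * (r*r) + C * (2*(r-p1)) * (r*r) + 2 * C * 0 * (-2*r*p2) + B * (2*((p1-r)\<^sup>2+p2\<^sup>2+r*(p1-k1)))))
    - (B * (2*r) * r + A * (2*p1) + C * (2*r) * (r*r) + B * (2*r*(r+p1)))\<^sup>2
    - (B * 0 * r + A * (-2*p2) + C * 0 * (r*r) + B * (-2*r*p2))\<^sup>2
   = 4 * r^3 * (((2*B + r*C) + r * (3*C + r*D)) * (A + r*B) - r * (2*B + r*C)\<^sup>2)
     + 4 * A * (A + r*B) * (r*y - p1\<^sup>2 - p2\<^sup>2)"
  by (simp add: algebra_simps power2_eq_square eval_nat_numeral)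

lemma Kform_radial:
  fixes A B C D r y :: real and p k :: complex
  assumes r: "r > 0" and G: "A + r * B > 0"
  shows "Kform A B C D (of_real r) (of_real r) p p (of_real y) k k =
     - 2 * (((2*B + r*C) + r * (3*C + r*D)) * (A + r*B) - r * (2*B + r*C)\<^sup>2) / (A + r*B)^3
     - 2 * A * (y - (cmod p)\<^sup>2 / r) / (r * (A + r*B))\<^sup>2"
proof -
  obtain p1 p2 where p: "p = Complex p1 p2" by (cases p)
  obtain k1 k2 where k: "k = Complex k1 k2" by (cases k)
  define G where "G = A + r * B"
  have h0: "A * r + B * (r * r) = r * G" by (simp add: G_def algebra_simps)
  have hn: "r * G \<noteq> 0" using r G by (simp add: G_def)
  have den: "A * Re (of_real r) + B * Re (of_real r * cnj (of_real r)) = A * r + B * (r * r)" by simp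
  have "Kform A B C D (of_real r) (of_real r) p p (of_real y) k k
     = - 2 / (A * r + B * (r * r)) * (1/4 * (Eform A B C D 1 (of_real r) (of_real r) p p (of_real y) k k
         + Eform A B C D \<i> (of_real r) (of_real r) p p (of_real y) k k))"
    unfolding Kform_def den ..
  also have "\<dots> = - (1/2) * (4 * r^3 * (((2*B + r*C) + r * (3*C + r*D)) * (A + r*B) - r * (2*B + r*C)\<^sup>2)
     + 4 * A * (A + r*B) * (r*y - p1\<^sup>2 - p2\<^sup>2)) / (A * r + B * (r * r))^3"
    unfolding Eform_rad1[OF p k] Eform_radi[OF p k] d2form_NH
    unfolding combine2[OF hn[folded h0]] poly_rad ..
  also have "\<dots> = - 2 * (((2*B + r*C) + r * (3*C + r*D)) * (A + r*B) - r * (2*B + r*C)\<^sup>2) / (A + r*B)^3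
     - 2 * A * (y - (cmod p)\<^sup>2 / r) / (r * (A + r*B))\<^sup>2"
  proof -
    have cm: "(cmod p)\<^sup>2 = p1\<^sup>2 + p2\<^sup>2" using p by (simp add: cmod_power2)
    show ?thesis
    unfolding h0 cm using r hn unfolding G_def[symmetric]
    by (simp add: field_simps power2_eq_square eval_nat_numeral)
  qed
  finally show ?thesis .
qed


lemma herm_self: "herm x x = of_real ((norm x)\<^sup>2)"
proof -
  have "herm x x = (\<Sum>j\<in>UNIV. of_real ((cmod (x $ j))\<^sup>2))"
    unfolding herm_def by (simp only: complex_norm_square)
  also have "\<dots> = of_real (\<Sum>j\<in>UNIV. (cmod (x $ j))\<^sup>2)" by simp
  also have "(\<Sum>j\<in>UNIV. (cmod (x $ j))\<^sup>2) = (norm x)\<^sup>2"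
    unfolding norm_vec_def L2_set_def by (simp add: sum_nonneg)
  finally show ?thesis .
qed

lemma herm_cs: "(cmod (herm Y z))\<^sup>2 \<le> (norm Y)\<^sup>2 * (norm z)\<^sup>2"
proof -
  have "cmod (herm Y z) \<le> (\<Sum>j\<in>UNIV. cmod (Y $ j * cnj (z $ j)))"
    unfolding herm_def by (rule norm_sum)
  also have "\<dots> = (\<Sum>j\<in>UNIV. \<bar>cmod (Y $ j)\<bar> * \<bar>cmod (z $ j)\<bar>)"
    by (simp add: norm_mult)
  also have "\<dots> \<le> norm Y * norm z"
    unfolding norm_vec_def by (rule L2_set_mult_ineq)
  finally have "cmod (herm Y z) \<le> norm Y * norm z" .
  then have "(cmod (herm Y z))\<^sup>2 \<le> (norm Y * norm z)\<^sup>2"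
    by (intro power_mono) auto
  then show ?thesis by (simp add: power_mult_distrib)
qed

lemma herm_zero_left[simp]: "herm 0 z = 0" by (simp add: herm_def)

lemma Kform_line:
  assumes "x > 0" "A \<noteq> 0"
  shows "Kform A B C D (of_real x) 0 0 0 0 0 0 = - 4 * B / A\<^sup>2"
  using assms unfolding Kform_def Eform_def d2form_def
  by (simp add: field_simps power2_eq_square)

lemma G_eq: "t > 0 \<Longrightarrow> A_fun t + t * B_fun t = 1 + t * (u_fun t)\<^sup>2"
  by (simp add: A_fun_def B_fun_def field_simps power2_eq_square)
lemma G1_eq: "t > 0 \<Longrightarrow> 2 * B_fun t + t * C_fun t = (u_fun t)\<^sup>2 + 2 * t * u_fun t * u1 t"
  by (simp add: B_fun_def C_fun_def field_simps power2_eq_square eval_nat_numeral)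
lemma G2_eq: "t > 0 \<Longrightarrow> 3 * C_fun t + t * D_fun t = 4 * u_fun t * u1 t + 2 * t * ((u1 t)\<^sup>2 + u_fun t * u2 t)"
  by (simp add: C_fun_def D_fun_def field_simps power2_eq_square eval_nat_numeral)

definition K1 :: "real \<Rightarrow> real" where
  "K1 t = - 2 * (((2 * B_fun t + t * C_fun t) + t * (3 * C_fun t + t * D_fun t)) * (A_fun t + t * B_fun t)
            - t * (2 * B_fun t + t * C_fun t)\<^sup>2) / (A_fun t + t * B_fun t)^3"

lemma K1_neg_eventually: "eventually (\<lambda>t. K1 t < 0) at_top"
proof -
  have ev: "eventually (\<lambda>t::real.
      ((((t-1)/(t*ln t))\<^sup>2 + 2 * t * ((t-1)/(t*ln t)) * ((ln t + 1 - t)/(t^2 * (ln t)^2)))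
        + t * (4 * ((t-1)/(t*ln t)) * ((ln t + 1 - t)/(t^2 * (ln t)^2))
           + 2 * t * (((ln t + 1 - t)/(t^2 * (ln t)^2))\<^sup>2
              + ((t-1)/(t*ln t)) * (((1-t)*ln t - 2*(ln t+1-t)*(ln t+1))/(t^3*(ln t)^3)))))
       * (1 + t * ((t-1)/(t*ln t))\<^sup>2)
      - t * (((t-1)/(t*ln t))\<^sup>2 + 2 * t * ((t-1)/(t*ln t)) * ((ln t + 1 - t)/(t^2 * (ln t)^2)))\<^sup>2 > 0) at_top"
    by real_asymp
  moreover have "eventually (\<lambda>t::real. t > 1) at_top" by (rule eventually_gt_at_top)
  ultimately show ?thesis
  proof eventually_elim
    case (elim t)
    have t: "t > 0" "t \<noteq> 1" using elim by auto
    have u: "u_fun t = (t-1)/(t*ln t)" using t by (simp add: u_fun_def)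
    have G: "A_fun t + t * B_fun t > 0" using t by (simp add: G_eq add_pos_nonneg)
    have "K1 t = - 2 * ((((u_fun t)\<^sup>2 + 2 * t * u_fun t * u1 t) + t * (4 * u_fun t * u1 t + 2 * t * ((u1 t)\<^sup>2 + u_fun t * u2 t)))
          * (1 + t * (u_fun t)\<^sup>2) - t * ((u_fun t)\<^sup>2 + 2 * t * u_fun t * u1 t)\<^sup>2) / (A_fun t + t * B_fun t)^3"
      unfolding K1_def G1_eq[OF t(1)] G2_eq[OF t(1)] G_eq[OF t(1)] ..
    also have "\<dots> < 0"
      using elim(1) G unfolding u u1_def u2_def
      by (intro divide_neg_pos) auto
    finally show ?case .
  qed
qed

lemma part2_bound:
  fixes z :: "complex^'n"
  assumes \<phi>: "\<phi> \<in> adm_curves z z" and r: "(norm z)\<^sup>2 > 1"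
  shows "gauss_curv0 (pullback \<phi>) \<le> K1 ((norm z)\<^sup>2)"
proof -
  obtain S where S: "open S" "0 \<in> S" and hol: "\<And>j. (\<lambda>T. \<phi> T $ j) holomorphic_on S"
    and z0: "\<phi> 0 = z" and X0: "vderiv \<phi> 0 = z"
    using \<phi> unfolding adm_curves_def by blast
  define t where "t = (norm z)\<^sup>2"
  have t: "t > 1" using r by (simp add: t_def)
  have G: "A_fun t + t * B_fun t > 0" using t by (simp add: G_eq add_pos_nonneg)
  have hz: "herm z z = of_real t" by (simp add: herm_self t_def)
  have pos: "A_fun ((norm (\<phi> 0))\<^sup>2) * (norm (vderiv \<phi> 0))\<^sup>2 + B_fun ((norm (\<phi> 0))\<^sup>2) * (cmod (herm (vderiv \<phi> 0) (\<phi> 0)))\<^sup>2 > 0"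
  proof -
    have "A_fun t * t + B_fun t * t\<^sup>2 = t * (A_fun t + t * B_fun t)" by (simp add: algebra_simps power2_eq_square)
    also have "\<dots> > 0" using t G by simp
    finally show ?thesis using t by (simp add: z0 X0 hz t_def[symmetric])
  qed
  define Y where "Y = (\<chi> j. gcf2 \<phi> j 0)"
  define Z where "Z = (\<chi> j. gcf3 \<phi> j 0)"
  have "gauss_curv0 (pullback \<phi>) = Kform (A_fun t) (B_fun t) (C_fun t) (D_fun t) (of_real t) (of_real t)
      (herm Y z) (herm Y z) (of_real ((norm Y)\<^sup>2)) (herm Z z) (herm Z z)"
  proof -
    have gf: "gauss_curv0 (pullback \<phi>) =
    Kform (A_fun ((norm (\<phi> 0))\<^sup>2)) (B_fun ((norm (\<phi> 0))\<^sup>2)) (C_fun ((norm (\<phi> 0))\<^sup>2)) (D_fun ((norm (\<phi> 0))\<^sup>2))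
      (herm (vderiv \<phi> 0) (vderiv \<phi> 0)) (herm (vderiv \<phi> 0) (\<phi> 0))
      (herm (\<chi> j. gcf2 \<phi> j 0) (\<phi> 0)) (herm (\<chi> j. gcf2 \<phi> j 0) (vderiv \<phi> 0))
      (herm (\<chi> j. gcf2 \<phi> j 0) (\<chi> j. gcf2 \<phi> j 0)) (herm (\<chi> j. gcf3 \<phi> j 0) (vderiv \<phi> 0))
      (herm (\<chi> j. gcf3 \<phi> j 0) (\<phi> 0))"
      by (rule gauss_formula[OF S hol, where I="{1<..}", OF _ _ _ pos]) (use t in \<open>auto simp: z0 t_def\<close>)
    show ?thesis using gf
      unfolding z0 X0 Y_def[symmetric] Z_def[symmetric] t_def[symmetric] hz herm_self .
  qed
  also have "\<dots> = K1 t - 2 * A_fun t * ((norm Y)\<^sup>2 - (cmod (herm Y z))\<^sup>2 / t) / (t * (A_fun t + t * B_fun t))\<^sup>2"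
  proof -
    have t0: "t > 0" using t by simp
    show ?thesis unfolding Kform_radial[OF t0 G] K1_def ..
  qed
  also have "\<dots> \<le> K1 t"
  proof -
    have "A_fun t \<ge> 0" using t v_nonneg[of t] by (simp add: A_fun_def)
    moreover have "(cmod (herm Y z))\<^sup>2 / t \<le> (norm Y)\<^sup>2"
      using herm_cs[of Y z] t by (simp add: t_def divide_le_eq)
    ultimately have "0 \<le> 2 * A_fun t * ((norm Y)\<^sup>2 - (cmod (herm Y z))\<^sup>2 / t) / (t * (A_fun t + t * B_fun t))\<^sup>2"
      by simp
    then show ?thesis by simp
  qed
  finally show ?thesis by (simp add: t_def)
qed


lemma A_pos: "t > 0 \<Longrightarrow> A_fun t > 0"
  using v_nonneg[of t] by (simp add: A_fun_def add_pos_nonneg)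

lemma line_curve:
  fixes z X :: "complex^'n"
  assumes z: "z \<noteq> 0" and r: "(norm z)\<^sup>2 < 1" and X: "X \<noteq> 0" and hx: "herm X z = 0"
  shows "ereal (- 4 * B_fun ((norm z)\<^sup>2) / (A_fun ((norm z)\<^sup>2))\<^sup>2) \<le> hsc z X"
proof -
  define \<phi> where "\<phi> = (\<lambda>T::complex. \<chi> j. z $ j + T * X $ j)"
  have comp: "(\<lambda>T. \<phi> T $ j) = (\<lambda>T. z $ j + T * X $ j)" for j by (simp add: \<phi>_def)
  have hol: "(\<lambda>T. \<phi> T $ j) holomorphic_on UNIV" for j unfolding comp by (intro holomorphic_intros)
  have der: "deriv (\<lambda>T. z $ j + T * X $ j) T = X $ j" for j T
    by (rule DERIV_imp_deriv) (auto intro!: derivative_eq_intros)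
  have vd: "vderiv \<phi> T = X" for T by (simp add: vderiv_def comp der vec_eq_iff)
  have z0: "\<phi> 0 = z" by (simp add: \<phi>_def vec_eq_iff)
  have hz: "herm z z \<noteq> 0" using z by (simp add: herm_self)
  have nz: "\<phi> T \<noteq> 0" for T
  proof
    assume "\<phi> T = 0"
    then have "herm (\<phi> T) z = 0" by simp
    moreover have "herm (\<phi> T) z = herm z z + T * herm X z"
      by (simp add: herm_def \<phi>_def distrib_right sum.distrib sum_distrib_left mult.assoc)
    ultimately show False using hx hz by simp
  qed
  have adm: "\<phi> \<in> adm_curves z X"
    unfolding adm_curves_def using hol nz z0 vd by (intro CollectI exI[of _ UNIV]) auto
  have S: "open (UNIV :: complex set)" "(0::complex) \<in> UNIV" by auto
  have g0: "gcf0 \<phi> j = (\<lambda>T. z $ j + T * X $ j)" for j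
    by (simp add: gcf0_def[OF S hol] comp)
  have g1: "gcf1 \<phi> j = (\<lambda>T. X $ j)" for j
    by (simp add: gcf1_def[OF S hol] g0 der[abs_def])
  have dc: "deriv (\<lambda>T::complex. c) = (\<lambda>T. 0)" for c :: complex
    by (rule ext, rule DERIV_imp_deriv) (rule DERIV_const)
  have g2: "gcf2 \<phi> j = (\<lambda>T. 0)" for j by (simp add: gcf2_def[OF S hol] g1 dc)
  have g3: "gcf3 \<phi> j = (\<lambda>T. 0)" for j by (simp add: gcf3_def[OF S hol] g2 dc)
  have Y0: "(\<chi> j. gcf2 \<phi> j 0) = 0" "(\<chi> j. gcf3 \<phi> j 0) = 0" by (simp_all add: g2 g3 vec_eq_iff)
  define t where "t = (norm z)\<^sup>2"
  have t: "t > 0" "t < 1" using z r by (auto simp: t_def)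
  have Xp: "(norm X)\<^sup>2 > 0" using X by simp
  have pos: "A_fun ((norm (\<phi> 0))\<^sup>2) * (norm (vderiv \<phi> 0))\<^sup>2 + B_fun ((norm (\<phi> 0))\<^sup>2) * (cmod (herm (vderiv \<phi> 0) (\<phi> 0)))\<^sup>2 > 0"
    unfolding z0 vd hx t_def[symmetric] using A_pos[OF t(1)] Xp by simp
  have gf: "gauss_curv0 (pullback \<phi>) =
    Kform (A_fun ((norm (\<phi> 0))\<^sup>2)) (B_fun ((norm (\<phi> 0))\<^sup>2)) (C_fun ((norm (\<phi> 0))\<^sup>2)) (D_fun ((norm (\<phi> 0))\<^sup>2))
      (herm (vderiv \<phi> 0) (vderiv \<phi> 0)) (herm (vderiv \<phi> 0) (\<phi> 0))
      (herm (\<chi> j. gcf2 \<phi> j 0) (\<phi> 0)) (herm (\<chi> j. gcf2 \<phi> j 0) (vderiv \<phi> 0))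
      (herm (\<chi> j. gcf2 \<phi> j 0) (\<chi> j. gcf2 \<phi> j 0)) (herm (\<chi> j. gcf3 \<phi> j 0) (vderiv \<phi> 0))
      (herm (\<chi> j. gcf3 \<phi> j 0) (\<phi> 0))"
    by (rule gauss_formula[OF S hol, where I="{0<..<1}", OF _ _ _ pos]) (use t in \<open>auto simp: z0 t_def\<close>)
  also have "\<dots> = Kform (A_fun t) (B_fun t) (C_fun t) (D_fun t) (of_real ((norm X)\<^sup>2)) 0 0 0 0 0 0"
    unfolding z0 vd Y0 hx herm_zero_left herm_self t_def by simp
  also have "\<dots> = - 4 * B_fun t / (A_fun t)\<^sup>2"
    by (rule Kform_line[OF Xp]) (use A_pos[OF t(1)] in simp)
  finally have "gauss_curv0 (pullback \<phi>) = - 4 * B_fun t / (A_fun t)\<^sup>2" .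
  moreover have "ereal (gauss_curv0 (pullback \<phi>)) \<le> hsc z X"
    unfolding hsc_def by (rule SUP_upper[OF adm])
  ultimately show ?thesis by (simp add: t_def)
qed

lemma part1_bound:
  assumes r0: "0 < r" and r1: "r < exp (-1)"
  shows "4 * (1-r)\<^sup>2 * (- ln r - 1) / (r * (- ln r) + 1)\<^sup>2 \<le> - 4 * B_fun r / (A_fun r)\<^sup>2"
proof -
  define L where "L = - ln r"
  have "ln r < ln (exp (-1))" using r0 r1 by (subst ln_less_cancel_iff) auto
  then have L1: "L > 1" unfolding L_def by simp
  have rl1: "r < 1" using r1 by (rule less_trans) simp
  have GI: "GI r = 1 / L" by (simp add: GI_def L_def)
  have vb1: "(1-r)\<^sup>2 / L \<le> v_fun r" using v_bounds(1)[OF r0 rl1] by (simp add: GI)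
  have vb2: "v_fun r \<le> 1 / L" using v_bounds(2)[OF r0 rl1] by (simp add: GI)
  have u: "(u_fun r)\<^sup>2 = (1-r)\<^sup>2 / (r\<^sup>2 * L\<^sup>2)"
    using r0 rl1 by (simp add: u_fun_def L_def power2_eq_square field_simps)
  define \<beta> where "\<beta> = (1-r)\<^sup>2 * (L - 1) / (r\<^sup>2 * L\<^sup>2)"
  have mB: "\<beta> \<le> - B_fun r"
  proof -
    have "\<beta> = (1-r)\<^sup>2 / L / r\<^sup>2 - (u_fun r)\<^sup>2"
      unfolding \<beta>_def u using r0 L1 by (simp add: field_simps power2_eq_square)
    also have "\<dots> \<le> v_fun r / r\<^sup>2 - (u_fun r)\<^sup>2"
      using divide_right_mono[OF vb1, of "r\<^sup>2"] by simp
    finally show ?thesis by (simp add: B_fun_def)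
  qed
  have \<beta>0: "\<beta> \<ge> 0" using L1 by (simp add: \<beta>_def)
  have Ap: "A_fun r > 0" by (rule A_pos[OF r0])
  have Amax: "A_fun r \<le> (r * L + 1) / (r * L)"
  proof -
    have "v_fun r / r \<le> (1/L) / r" using divide_right_mono[OF vb2, of r] r0 by simp
    then have "A_fun r \<le> 1 + (1/L) / r" unfolding A_fun_def by simp
    also have "\<dots> = (r * L + 1) / (r * L)" using r0 L1 by (simp add: field_simps)
    finally show ?thesis .
  qed
  have e1: "4 * \<beta> * (r * L)\<^sup>2 = 4 * (1-r)\<^sup>2 * (L - 1)"
    unfolding \<beta>_def using r0 L1 by (simp add: field_simps power2_eq_square)
  have "4 * (1-r)\<^sup>2 * (- ln r - 1) / (r * (- ln r) + 1)\<^sup>2 = 4 * (1-r)\<^sup>2 * (L - 1) / (r * L + 1)\<^sup>2"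
    by (simp only: L_def)
  also have "\<dots> = 4 * \<beta> * (r * L)\<^sup>2 / (r * L + 1)\<^sup>2"
    unfolding e1 ..
  also have "\<dots> = (4 * \<beta>) / ((r * L + 1) / (r * L))\<^sup>2"
    by (simp add: power_divide)
  also have "\<dots> \<le> (- 4 * B_fun r) / (A_fun r)\<^sup>2"
  proof (rule frac_le)
    show "0 \<le> - 4 * B_fun r" using mB \<beta>0 by simp
    show "4 * \<beta> \<le> - 4 * B_fun r" using mB by simp
    show "0 < (A_fun r)\<^sup>2" using Ap by simp
    show "(A_fun r)\<^sup>2 \<le> ((r * L + 1) / (r * L))\<^sup>2" using Amax Ap by (intro power_mono) auto
  qed
  finally show ?thesis .
qed


lemma exists_perp:
  assumes ij: "(i::'n::finite) \<noteq> j"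
  shows "\<exists>X::complex^'n. X \<noteq> 0 \<and> herm X z = 0"
proof (cases "z $ i = 0 \<and> z $ j = 0")
  case True
  define X where "X = (\<chi> k. if k = i then (1::complex) else 0)"
  have "X \<noteq> 0" by (auto simp: X_def vec_eq_iff)
  moreover have "herm X z = 0"
  proof -
    have "herm X z = (\<Sum>k\<in>UNIV. if k = i then cnj (z $ i) else 0)"
      unfolding herm_def X_def by (intro sum.cong) auto
    then show ?thesis using True by simp
  qed
  ultimately show ?thesis by blast
next
  case False
  define X where "X = (\<chi> k. if k = i then cnj (z $ j) else if k = j then - cnj (z $ i) else 0)"
  have "X \<noteq> 0"
  proof
    assume "X = 0"
    then have "X $ i = 0" "X $ j = 0" by simp_all
    then show False using False ij by (simp add: X_def)
  qed
  moreover have "herm X z = 0"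
  proof -
    have "herm X z = (\<Sum>k\<in>UNIV. (if k = i then cnj (z $ j) * cnj (z $ i) else 0) + (if k = j then - cnj (z $ i) * cnj (z $ j) else 0))"
      unfolding herm_def X_def using ij by (intro sum.cong) auto
    also have "\<dots> = 0" by (simp add: sum.distrib)
    finally show ?thesis .
  qed
  ultimately show ?thesis by blast
qed

theorem theorem1p1:
  assumes "CARD('n) \<ge> 2"
  shows "((Kplus :: complex^'n \<Rightarrow> ereal) \<longlongrightarrow> \<infinity>) (at 0)
         \<and> (\<exists>R>0. \<forall>z::complex^'n. norm z \<ge> R \<longrightarrow> Kminus z < 0)"
proof
  obtain i j :: 'n where ij: "i \<noteq> j"
  proof -
    obtain i :: 'n where True by blast
    have "UNIV \<noteq> {i}" using assms by (metis One_nat_def card.empty card_insert_disjoint empty_iff finite.emptyI not_less_eq_eq numeral_2_eq_2 order_refl)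
    then obtain j where "j \<noteq> i" by blast
    then show ?thesis using that by blast
  qed
  show "((Kplus :: complex^'n \<Rightarrow> ereal) \<longlongrightarrow> \<infinity>) (at 0)"
    unfolding tendsto_PInfty
  proof
    fix M :: real
    define LB where "LB r = 4 * (1-r)\<^sup>2 * (- ln r - 1) / (r * (- ln r) + 1)\<^sup>2" for r :: real
    have lim: "filterlim LB at_top (at_right 0)" unfolding LB_def by real_asymp
    have ev1: "eventually (\<lambda>r. M < LB r) (at_right 0)" using lim by (simp add: filterlim_at_top_dense)
    have ev2: "eventually (\<lambda>r::real. r < exp (-1)) (at_right 0)" by real_asymp
    have ev3: "eventually (\<lambda>r::real. 0 < r) (at_right 0)" by (simp add: eventually_at_right_less)
    have ev: "eventually (\<lambda>r. M < LB r \<and> 0 < r \<and> r < exp (-1)) (at_right 0)"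
      using ev1 ev2 ev3 by eventually_elim auto
    have nz: "eventually (\<lambda>z::complex^'n. z \<noteq> 0) (at 0)" by (simp add: eventually_at_filter)
    have fl: "filterlim (\<lambda>z::complex^'n. (norm z)\<^sup>2) (at_right 0) (at 0)"
    proof (rule tendsto_imp_filterlim_at_right)
      show "((\<lambda>z::complex^'n. (norm z)\<^sup>2) \<longlongrightarrow> 0) (at 0)"
        by (auto intro!: tendsto_eq_intros)
      show "eventually (\<lambda>z::complex^'n. (norm z)\<^sup>2 > 0) (at 0)"
        using nz by eventually_elim simp
    qed
    have ev': "eventually (\<lambda>z::complex^'n. M < LB ((norm z)\<^sup>2) \<and> 0 < (norm z)\<^sup>2 \<and> (norm z)\<^sup>2 < exp (-1)) (at 0)"
      using fl ev unfolding filterlim_iff by blast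
    show "eventually (\<lambda>z::complex^'n. ereal M < Kplus z) (at 0)"
      using ev' nz
    proof eventually_elim
      case (elim z)
      define t where "t = (norm z)\<^sup>2"
      have t: "0 < t" "t < exp (-1)" "M < LB t" using elim by (auto simp: t_def)
      have t1: "t < 1" using t(2) by (rule less_trans) simp
      obtain X :: "complex^'n" where X: "X \<noteq> 0" "herm X z = 0" using exists_perp[OF ij] by blast
      have "ereal M < ereal (LB t)" using t by simp
      also have "\<dots> \<le> ereal (- 4 * B_fun t / (A_fun t)\<^sup>2)"
        using part1_bound[OF t(1) t(2)] by (simp add: LB_def)
      also have "\<dots> \<le> hsc z X"
        using line_curve[OF elim(2) _ X] t1 by (simp add: t_def)
      also have "\<dots> \<le> Kplus z"
        unfolding Kplus_def using X by (intro SUP_upper) auto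
      finally show ?case .
    qed
  qed
  show "\<exists>R>0. \<forall>z::complex^'n. norm z \<ge> R \<longrightarrow> Kminus z < 0"
  proof -
    obtain N where N: "\<And>t. t \<ge> N \<Longrightarrow> K1 t < 0"
      using K1_neg_eventually unfolding eventually_at_top_linorder by blast
    define R where "R = sqrt (max N 2)"
    have R: "R > 0" by (simp add: R_def)
    have "Kminus z < 0" if z: "norm z \<ge> R" for z :: "complex^'n"
    proof -
      define t where "t = (norm z)\<^sup>2"
      have "R\<^sup>2 \<le> t" unfolding t_def using z R by (intro power_mono) auto
      then have t: "t \<ge> max N 2" by (simp add: R_def)
      have z0: "z \<noteq> 0" using z R by auto
      have "Kminus z \<le> hsc z z"
        unfolding Kminus_def using z0 by (intro INF_lower) auto
      also have "\<dots> \<le> ereal (K1 t)"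
        unfolding hsc_def
      proof (rule SUP_least)
        fix \<phi> assume "\<phi> \<in> adm_curves z z"
        then show "ereal (gauss_curv0 (pullback \<phi>)) \<le> ereal (K1 t)"
          using part2_bound[of \<phi> z] t by (simp add: t_def)
      qed
      also have "\<dots> < 0" using N[of t] t by simp
      finally show ?thesis .
    qed
    then show ?thesis using R by blast
  qed
qed

end
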